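(* Let $n\ge 3$. The $S$-algebra $(\mathbb{C}\langle u,v\rangle^{D_{2n}},\circ)$ is generated as an $S$-algebra by the two elements $uv+vu$ and $u^n+v^n$; that is, the smallest $S$-subalgebra of $\mathbb{C}\langle u,v\rangle$ containing $uv+vu$ and $u^n+v^n$ equals $\mathbb{C}\langle u,v\rangle^{D_{2n}}$.
   Context: $\mathbb{C}\langle u,v\rangle$ is the free associative unital algebra over $\mathbb C$ on noncommuting $u,v$; $\mathbb{C}\langle u,v\rangle^{(k)}$ is its homogeneous component of total degree $k$. The dihedral group $D_{2n}=\langle\rho,\tau\mid \rho^n=\tau^2=(\tau\rho)^2=1\rangle$ acts on $\mathbb{C}\langle u,v\rangle$ by algebra automorphisms determined by $\rho(u)=\xi u$, $\rho(v)=\xi^{-1}v$, $\tau(u)=v$, $\tau(v)=u$, $\xi=e^{2\pi i/n}$, and $\mathbb{C}\langle u,v\rangle^{D_{2n}}$ is the algebra of fixed points. (Koryukin's position action) For each $k$, the symmetric group $\mathrm{Sym}(k)$ acts on $\mathbb{C}\langle u,v\rangle^{(k)}$ from the right by permuting positions: for a monomial $x_{i_1}\cdots x_{i_k}$ with $x_{i_j}\in\{u,v\}$ and $\pi\in\mathrm{Sym}(k)$, $(x_{i_1}\cdots x_{i_k})\circ\pi=x_{i_{\pi^{-1}(1)}}\cdots x_{i_{\pi^{-1}(k)}}$, extended linearly. An $S$-subalgebra is a graded (unital) subalgebra $F=\bigoplus_k F^{(k)}$ of $\mathbb{C}\langle u,v\rangle$ with $F^{(k)}\circ\mathrm{Sym}(k)=F^{(k)}$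 for all $k$; the $S$-subalgebra generated by a set of homogeneous elements is the smallest $S$-subalgebra containing it. *)

theory Defs
  imports "HOL-Combinatorics.Permutations" Complex_Main
begin

text \<open>Model of the free algebra C<u,v>: a function from words (bool lists,
 False = u, True = v) to complex coefficients with finite support.\<close>

type_synonym fa = "bool list \<Rightarrow> complex"

definition fa_carrier :: "fa set" where
  "fa_carrier = {f. finite {w. f w \<noteq> 0}}"

definition fa_zero :: fa where "fa_zero = (\<lambda>w. 0)"
definition fa_one :: fa where "fa_one = (\<lambda>w. if w = [] then 1 else 0)"
definition fa_add :: "fa \<Rightarrow> fa \<Rightarrow> fa" where "fa_add f g = (\<lambda>w. f w + g w)"
definition fa_smult :: "complex \<Rightarrow> fa \<Rightarrow> fa" where "fa_smult c f = (\<lambda>w. c * f w)"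
definition fa_mult :: "fa \<Rightarrow> fa \<Rightarrow> fa" where
  "fa_mult f g = (\<lambda>w. \<Sum>i\<le>length w. f (take i w) * g (drop i w))"

primrec fa_pow :: "fa \<Rightarrow> nat \<Rightarrow> fa" where
  "fa_pow f 0 = fa_one"
| "fa_pow f (Suc m) = fa_mult f (fa_pow f m)"

definition fa_mono :: "bool list \<Rightarrow> fa" where
  "fa_mono w0 = (\<lambda>w. if w = w0 then 1 else 0)"

definition fa_u :: fa where "fa_u = fa_mono [False]"
definition fa_v :: fa where "fa_v = fa_mono [True]"

definition hom_part :: "nat \<Rightarrow> fa \<Rightarrow> fa" where
  "hom_part k f = (\<lambda>w. if length w = k then f w else 0)"

definition homogeneous :: "nat \<Rightarrow> fa \<Rightarrow> bool" where
  "homogeneous k f \<longleftrightarrow> (\<forall>w. length w \<noteq> k \<longrightarrow> f w = 0)"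

text \<open>Koryukin's position action of pi (a permutation of {0..<k}) on degree-k elements:
 (x_{i_1}...x_{i_k}) o pi = x_{i_{pi^-1(1)}} ... x_{i_{pi^-1(k)}}; hence the
 coefficient of a word w' in f o pi is the coefficient of w with w ! i = w' ! pi i.\<close>
definition pos_act :: "nat \<Rightarrow> (nat \<Rightarrow> nat) \<Rightarrow> fa \<Rightarrow> fa" where
  "pos_act k \<pi> f = (\<lambda>w'. if length w' = k then f (map (\<lambda>i. w' ! \<pi> i) [0..<k]) else 0)"

definition S_subalgebra :: "fa set \<Rightarrow> bool" where
  "S_subalgebra F \<longleftrightarrow>
     F \<subseteq> fa_carrier \<and> fa_one \<in> F \<and>
     (\<forall>f\<in>F. \<forall>g\<in>F. fa_add f g \<in> F) \<and>
     (\<forall>c. \<forall>f\<in>F. fa_smult c f \<in> F) \<and>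
     (\<forall>f\<in>F. \<forall>g\<in>F. fa_mult f g \<in> F) \<and>
     (\<forall>f\<in>F. \<forall>k. hom_part k f \<in> F) \<and>
     (\<forall>k f \<pi>. f \<in> F \<longrightarrow> homogeneous k f \<longrightarrow> \<pi> permutes {0..<k} \<longrightarrow> pos_act k \<pi> f \<in> F)"

definition S_generated :: "fa set \<Rightarrow> fa set" where
  "S_generated G = \<Inter> {F. S_subalgebra F \<and> G \<subseteq> F}"

text \<open>Dihedral action: rho^j tau^b, with rho(u) = xi u, rho(v) = xi^-1 v, tau swapping u, v.\<close>
definition xi :: "nat \<Rightarrow> complex" where "xi n = cis (2 * pi / real n)"

definition weight :: "bool list \<Rightarrow> int" where
  "weight w = int (length (filter Not w)) - int (length (filter id w))"

definition rho_act :: "nat \<Rightarrow> nat \<Rightarrow> fa \<Rightarrow> fa" where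
  "rho_act n j f = (\<lambda>w. (xi n) powi (int j * weight w) * f w)"

definition tau_act :: "fa \<Rightarrow> fa" where
  "tau_act f = (\<lambda>w. f (map Not w))"

definition dih_act :: "nat \<Rightarrow> nat \<Rightarrow> bool \<Rightarrow> fa \<Rightarrow> fa" where
  "dih_act n j b f = rho_act n j (if b then tau_act f else f)"

definition dihedral_invariants :: "nat \<Rightarrow> fa set" where
  "dihedral_invariants n =
     {f \<in> fa_carrier. \<forall>j<n. \<forall>b. dih_act n j b f = f}"

end

theory Submission
  imports Defs
begin

definition ee :: "bool list \<Rightarrow> fa" where
  "ee w = fa_add (fa_mono w) (fa_mono (map Not w))"

lemma fa_mult_mono: "fa_mult (fa_mono a) (fa_mono b) = fa_mono (a @ b)"
proof
  fix w
  have "fa_mult (fa_mono a) (fa_mono b) w = (\<Sum>i\<le>length w. if take i w = a \<and> drop i w = b then 1 else 0)"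
    unfolding fa_mult_def fa_mono_def by (intro sum.cong) auto
  also have "\<dots> = fa_mono (a @ b) w"
  proof (cases "w = a @ b")
    case True
    have "(\<Sum>i\<le>length w. if take i w = a \<and> drop i w = b then 1 else (0::complex))
        = (\<Sum>i\<le>length w. if i = length a then 1 else 0)"
    proof (intro sum.cong refl)
      fix i assume "i \<in> {..length w}"
      then have "i \<le> length w" by simp
      have "take i w = a \<Longrightarrow> i = length a"
      proof -
        assume "take i w = a"
        then have "length (take i w) = length a" by simp
        with \<open>i \<le> length w\<close> show "i = length a" by simp
      qed
      then show "(if take i w = a \<and> drop i w = b then 1 else (0::complex)) = (if i = length a then 1 else 0)"
        using True by auto
    qed
    also have "\<dots> = 1" using True by simp
    finally show ?thesis using True by (simp add: fa_mono_def)
  next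
    case False
    have "(\<Sum>i\<le>length w. if take i w = a \<and> drop i w = b then 1 else (0::complex)) = 0"
      using False by (intro sum.neutral) (metis append_take_drop_id)
    then show ?thesis using False by (simp add: fa_mono_def)
  qed
  finally show "fa_mult (fa_mono a) (fa_mono b) w = fa_mono (a @ b) w" .
qed

lemma fa_mult_add_left: "fa_mult (fa_add f g) h = fa_add (fa_mult f h) (fa_mult g h)"
  by (simp add: fa_mult_def fa_add_def algebra_simps sum.distrib)

lemma fa_mult_add_right: "fa_mult f (fa_add g h) = fa_add (fa_mult f g) (fa_mult f h)"
  by (simp add: fa_mult_def fa_add_def algebra_simps sum.distrib)

lemma Not_comp_Not[simp]: "Not \<circ> Not = id" by auto

lemma map_Not_Not[simp]: "map Not (map Not w) = w"
  by (induct w) auto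

lemma fa_mult_ee: "fa_mult (ee a) (ee b) = fa_add (ee (a @ b)) (ee (a @ map Not b))"
  unfolding ee_def fa_mult_add_left fa_mult_add_right fa_mult_mono
  by (rule ext) (simp add: fa_add_def algebra_simps)

lemma ee_Not: "ee (map Not w) = ee w"
  unfolding ee_def by (rule ext) (simp add: fa_add_def algebra_simps)

lemma fa_pow_mono: "fa_pow (fa_mono [x]) m = fa_mono (replicate m x)"
proof (induct m)
  case 0 then show ?case by (simp add: fa_one_def fa_mono_def)
next
  case (Suc m) then show ?case by (simp add: fa_mult_mono)
qed

lemma p_ee: "fa_add (fa_mult fa_u fa_v) (fa_mult fa_v fa_u) = ee [False, True]"
  unfolding fa_u_def fa_v_def fa_mult_mono ee_def by simp

lemma q_ee: "fa_add (fa_pow fa_u n) (fa_pow fa_v n) = ee (replicate n False)"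
  unfolding fa_u_def fa_v_def fa_pow_mono ee_def by simp


lemma permute_list_inj:
  assumes "\<pi> permutes {..<length a}" "length b = length a"
    "permute_list \<pi> a = permute_list \<pi> b"
  shows "a = b"
proof (rule nth_equalityI)
  show "length a = length b" using assms by simp
  fix i assume i: "i < length a"
  define j where "j = inv \<pi> i"
  have j: "j < length a" unfolding j_def using i permutes_in_image[OF permutes_inv[OF assms(1)]] by simp
  have pj: "\<pi> j = i" unfolding j_def using permutes_inverses(1)[OF assms(1)] by simp
  have "a ! i = permute_list \<pi> a ! j" using permute_list_nth[OF assms(1) j] pj by simp
  also have "\<dots> = permute_list \<pi> b ! j" using assms(3) by simp
  also have "\<dots> = b ! i" using permute_list_nth[of \<pi> b j] assms j pj by simp
  finally show "a ! i = b ! i" .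
qed

lemma pos_act_mono:
  assumes "\<pi> permutes {0..<k}" "length z = k"
  shows "pos_act k \<pi> (fa_mono (permute_list \<pi> z)) = fa_mono z"
proof
  fix w
  show "pos_act k \<pi> (fa_mono (permute_list \<pi> z)) w = fa_mono z w"
  proof (cases "length w = k")
    case True
    have m: "map (\<lambda>i. w ! \<pi> i) [0..<k] = permute_list \<pi> w"
      using True by (simp add: permute_list_def)
    have "permute_list \<pi> w = permute_list \<pi> z \<longleftrightarrow> w = z"
      using permute_list_inj[of \<pi> w z] assms True by (auto simp: atLeast0LessThan)
    then show ?thesis using True m by (simp add: pos_act_def fa_mono_def)
  next
    case False
    then show ?thesis using assms by (auto simp add: pos_act_def fa_mono_def)
  qed
qed

lemma pos_act_add: "pos_act k \<pi> (fa_add f g) = fa_add (pos_act k \<pi> f) (pos_act k \<pi> g)"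
  by (rule ext) (simp add: pos_act_def fa_add_def)

lemma pos_act_ee:
  assumes "\<pi> permutes {0..<k}" "length z = k"
  shows "pos_act k \<pi> (ee (permute_list \<pi> z)) = ee z"
proof -
  have "map Not (permute_list \<pi> z) = permute_list \<pi> (map Not z)"
    using permute_list_map[of \<pi> z Not] assms by (simp add: atLeast0LessThan)
  then show ?thesis unfolding ee_def pos_act_add
    using pos_act_mono[OF assms(1)] assms(2) by simp
qed

lemma homogeneous_ee: "homogeneous (length z) (ee z)"
  unfolding homogeneous_def ee_def fa_add_def fa_mono_def by auto

lemma homogeneous_add: "homogeneous k f \<Longrightarrow> homogeneous k g \<Longrightarrow> homogeneous k (fa_add f g)"
  unfolding homogeneous_def fa_add_def by auto

lemma S_one: "S_subalgebra F \<Longrightarrow> fa_one \<in> F" unfolding S_subalgebra_def by blast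
lemma S_add: "S_subalgebra F \<Longrightarrow> f \<in> F \<Longrightarrow> g \<in> F \<Longrightarrow> fa_add f g \<in> F" unfolding S_subalgebra_def by blast
lemma S_smult: "S_subalgebra F \<Longrightarrow> f \<in> F \<Longrightarrow> fa_smult c f \<in> F" unfolding S_subalgebra_def by blast
lemma S_mult: "S_subalgebra F \<Longrightarrow> f \<in> F \<Longrightarrow> g \<in> F \<Longrightarrow> fa_mult f g \<in> F" unfolding S_subalgebra_def by blast
lemma S_pos: "S_subalgebra F \<Longrightarrow> f \<in> F \<Longrightarrow> homogeneous k f \<Longrightarrow> \<pi> permutes {0..<k} \<Longrightarrow> pos_act k \<pi> f \<in> F"
  unfolding S_subalgebra_def by blast

lemma ee_transport:
  assumes F: "S_subalgebra F" and w: "ee w \<in> F" and m: "mset w' = mset w"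
  shows "ee w' \<in> F"
proof -
  obtain p where p: "p permutes {..<length w'}" "permute_list p w' = w"
    using mset_eq_permutation[of w w'] m by metis
  have len: "length w = length w'" using m by (metis size_mset)
  have p': "p permutes {0..<length w'}" using p by (simp add: atLeast0LessThan)
  have "pos_act (length w') p (ee w) \<in> F"
    using S_pos[OF F w _ p'] homogeneous_ee[of w] len by simp
  then show ?thesis using pos_act_ee[OF p' refl] p(2) by simp
qed

lemma perm02: "permute_list (Transposition.transpose 0 2) (a#b#c#g) = c#b#a#g"
proof (rule nth_equalityI)
  fix i assume i: "i < length (permute_list (Transposition.transpose 0 2) (a#b#c#g))"
  have pp: "Transposition.transpose 0 2 permutes {..<length (a#b#c#g)}"
    by (rule permutes_swap_id) auto
  show "permute_list (Transposition.transpose 0 2) (a#b#c#g) ! i = (c#b#a#g) ! i"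
    using i permute_list_nth[OF pp, of i]
    by (cases "i = 0"; cases "i = 1"; cases "i = 2") (auto simp: transpose_def nth_Cons')
qed simp

lemma perm12: "permute_list (Transposition.transpose 1 2) (a#b#c#g) = a#c#b#g"
proof (rule nth_equalityI)
  fix i assume i: "i < length (permute_list (Transposition.transpose 1 2) (a#b#c#g))"
  have pp: "Transposition.transpose 1 2 permutes {..<length (a#b#c#g)}"
    by (rule permutes_swap_id) auto
  show "permute_list (Transposition.transpose 1 2) (a#b#c#g) ! i = (a#c#b#g) ! i"
    using i permute_list_nth[OF pp, of i]
    by (cases "i = 0"; cases "i = 1"; cases "i = 2") (auto simp: transpose_def nth_Cons')
qed simp

lemma triangle:
  assumes F: "S_subalgebra F"
    and X: "fa_add (ee (False#True#y#g)) (ee (True#False#y#g)) \<in> F"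
  shows "ee (y # (\<not>y) # y # g) \<in> F"
proof -
  define k where "k = length g + 3"
  have s1: "Transposition.transpose 0 2 permutes {0..<k}" unfolding k_def by (rule permutes_swap_id) auto
  have s2: "Transposition.transpose 1 2 permutes {0..<k}" unfolding k_def by (rule permutes_swap_id) auto
  have hX: "homogeneous k (fa_add (ee (False#True#y#g)) (ee (True#False#y#g)))"
    unfolding k_def using homogeneous_ee[of "False#True#y#g"] homogeneous_ee[of "True#False#y#g"]
    by (intro homogeneous_add) (simp_all add: numeral_3_eq_3)
  have X1: "pos_act k (Transposition.transpose 0 2) (fa_add (ee (False#True#y#g)) (ee (True#False#y#g)))
     = fa_add (ee (y#True#False#g)) (ee (y#False#True#g))"
    unfolding pos_act_add using pos_act_ee[OF s1, of "y#True#False#g", unfolded perm02] pos_act_ee[OF s1, of "y#False#True#g", unfolded perm02]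
    by (simp add: k_def)
  have X2: "pos_act k (Transposition.transpose 1 2) (fa_add (ee (False#True#y#g)) (ee (True#False#y#g)))
     = fa_add (ee (False#y#True#g)) (ee (True#y#False#g))"
    unfolding pos_act_add using pos_act_ee[OF s2, of "False#y#True#g", unfolded perm12] pos_act_ee[OF s2, of "True#y#False#g", unfolded perm12]
    by (simp add: k_def)
  have i1: "fa_add (ee (y#True#False#g)) (ee (y#False#True#g)) \<in> F"
    using S_pos[OF F X hX s1] X1 by simp
  have i2: "fa_add (ee (False#y#True#g)) (ee (True#y#False#g)) \<in> F"
    using S_pos[OF F X hX s2] X2 by simp
  have eq: "ee (y # (\<not>y) # y # g) = fa_smult (1/2) (fa_add (fa_add
       (fa_add (ee (False#True#y#g)) (ee (True#False#y#g)))
       (fa_add (ee (y#True#False#g)) (ee (y#False#True#g))))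
       (fa_smult (-1) (fa_add (ee (False#y#True#g)) (ee (True#y#False#g)))))"
    by (cases y) (rule ext, simp add: fa_add_def fa_smult_def algebra_simps)+
  show ?thesis unfolding eq
    by (intro S_smult[OF F] S_add[OF F] X i1 i2)
qed


lemma weight_Cons[simp]: "weight (x#xs) = (if x then -1 else 1) + weight xs"
  by (simp add: weight_def)

lemma weight_Nil[simp]: "weight [] = 0"
  by (simp add: weight_def)

lemma weight_append[simp]: "weight (a @ b) = weight a + weight b"
  by (induct a) auto

lemma weight_Not[simp]: "weight (map Not w) = - weight w"
  by (induct w) auto

lemma weight_replicate_False[simp]: "weight (replicate k False) = int k"
  by (induct k) auto

lemma weight_replicate_True[simp]: "weight (replicate k True) = - int k"
  by (induct k) auto

lemma weight_count: "weight w = int (count (mset w) False) - int (count (mset w) True)"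
  by (induct w) auto

lemma weight_mset: "mset a = mset b \<Longrightarrow> weight a = weight b"
  by (simp add: weight_count)

lemma ee_Nil: "ee [] = fa_smult 2 fa_one"
  unfolding ee_def by (rule ext) (simp add: fa_add_def fa_smult_def fa_one_def fa_mono_def)

lemma count_both: "count (mset w) False + count (mset w) True = length w"
  by (induct w) auto

lemma main_incl:
  assumes F: "S_subalgebra F" and n: "n \<ge> 3"
    and p: "ee [False, True] \<in> F" and q: "ee (replicate n False) \<in> F"
  shows "int n dvd weight w \<Longrightarrow> ee w \<in> F"
proof (induct "length w" arbitrary: w rule: less_induct)
  case (less w)
  note IH = less(1)
  have mixed: "ee w' \<in> F" if l: "length w' = length w" and v: "int n dvd weight w'"
    and hF: "False \<in> set w'" and hT: "True \<in> set w'" for w'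
  proof -
    have cF: "count (mset w') False \<ge> 1" using hF by (simp add: Suc_le_eq)
    have cT: "count (mset w') True \<ge> 1" using hT by (simp add: Suc_le_eq)
    show ?thesis
    proof (cases "length w' \<le> 2")
      case True
      then have "length w' = 2" using cF cT count_both[of w'] by linarith
      then obtain a b where ab: "w' = [a, b]"
        by (auto simp: length_Suc_conv numeral_2_eq_2)
      then have "a \<noteq> b" using hF hT by auto
      then have "w' = [False, True] \<or> w' = map Not [False, True]" using ab by (cases a) auto
      then show ?thesis using p ee_Not[of "[False, True]"] by auto
    next
      case False
      then have l3: "length w' \<ge> 3" by simp
      obtain y where y2: "count (mset w') y \<ge> 2" and y1: "count (mset w') (\<not>y) \<ge> 1"
      proof (cases "count (mset w') False \<ge> 2")
        case True then show ?thesis using that[of False] cT by simp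
      next
        case False then show ?thesis using that[of True] cF count_both[of w'] l3 by simp
      qed
      obtain g where g: "mset g = mset w' - {#y, \<not>y, y#}" using ex_mset by blast
      have sub: "{#y, \<not>y, y#} \<subseteq># mset w'"
        unfolding subseteq_mset_def using y2 y1 by (cases y) auto
      have ms: "mset w' = mset (y # (\<not>y) # y # g)"
        using g subset_mset.diff_add[OF sub] by (simp add: add.commute)
      have wt: "weight w' = weight (y # g)" using weight_mset[OF ms] by (cases y) auto
      have lg: "length w' = length g + 3" using arg_cong[OF ms, of size] by simp
      have hg: "ee (y # g) \<in> F" using IH[of "y # g"] l lg wt v by simp
      have X: "fa_mult (ee [False, True]) (ee (y # g))
          = fa_add (ee (False#True#y#g)) (ee (True#False#y#g))"
        unfolding fa_mult_ee using ee_Not[of "True#False#y#g"] by simp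
      have "fa_add (ee (False#True#y#g)) (ee (True#False#y#g)) \<in> F"
        using S_mult[OF F p hg] X by simp
      then have "ee (y # (\<not>y) # y # g) \<in> F" by (rule triangle[OF F])
      then show ?thesis using ee_transport[OF F _ ms] by blast
    qed
  qed
  have pure: "ee w' \<in> F" if l: "length w' = length w" and v: "int n dvd weight w'"
    and hT: "True \<notin> set w'" for w'
  proof -
    define k where "k = length w'"
    have rep: "w' = replicate k False" unfolding k_def using hT
      by (intro replicate_length_same[symmetric]) (metis (full_types))
    have vk: "int n dvd int k" using v rep by simp
    then have nk: "n dvd k" by simp
    consider "k = 0" | "k = n" | "k > n" using nk n
    proof (cases "k = 0")
      case False
      then have "n \<le> k" using nk by (simp add: dvd_imp_le)
      then show ?thesis using that by linarith
    qed (use that in auto)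
    then show ?thesis
    proof cases
      case 1 then show ?thesis using rep ee_Nil S_smult[OF F S_one[OF F]] by simp
    next
      case 2 then show ?thesis using rep q by simp
    next
      case 3
      define r where "r = k - n"
      have kr: "k = n + r" using 3 unfolding r_def by simp
      have rpos: "r \<ge> 1" using 3 unfolding r_def by simp
      have nr: "n dvd r" using nk kr by (simp add: dvd_add_right_iff)
      have hr: "ee (replicate r False) \<in> F"
      proof (rule IH)
        have "k = length w" using l k_def by simp
        then show "length (replicate r False) < length w" using kr n by simp
        show "int n dvd weight (replicate r False)" using nr by simp
      qed
      have m: "ee (replicate n False @ replicate r True) \<in> F"
      proof (rule mixed)
        have "k = length w" using l k_def by simp
        then show "length (replicate n False @ replicate r True) = length w" using kr by simp
        show "int n dvd weight (replicate n False @ replicate r True)" using nr by simp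
        show "False \<in> set (replicate n False @ replicate r True)" using n by simp
        show "True \<in> set (replicate n False @ replicate r True)" using rpos by simp
      qed
      have X: "fa_mult (ee (replicate n False)) (ee (replicate r False))
          = fa_add (ee (replicate k False)) (ee (replicate n False @ replicate r True))"
        unfolding fa_mult_ee kr by (simp add: replicate_add)
      have eq: "ee w' = fa_add (fa_mult (ee (replicate n False)) (ee (replicate r False)))
                  (fa_smult (-1) (ee (replicate n False @ replicate r True)))"
        unfolding X rep by (rule ext) (simp add: fa_add_def fa_smult_def)
      show ?thesis unfolding eq by (intro S_add[OF F] S_smult[OF F] S_mult[OF F] q hr m)
    qed
  qed
  show ?case
  proof (cases "True \<in> set w")
    case False then show ?thesis using pure less(2) by simp
  next
    case True
    show ?thesis
    proof (cases "False \<in> set w")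
      case True then show ?thesis using mixed less(2) \<open>True \<in> set w\<close> by simp
    next
      case False
      have "\<forall>x\<in>set w. x" using False by (metis (full_types))
      then have "ee (map Not w) \<in> F" using pure[of "map Not w"] less(2) by auto
      then show ?thesis using ee_Not by simp
    qed
  qed
qed


lemma xi_powi_eq_1:
  assumes n: "n > 0"
  shows "xi n powi m = 1 \<longleftrightarrow> int n dvd m"
proof
  assume h: "xi n powi m = 1"
  have "cis (of_int m * (2 * pi / real n)) = 1" using h by (simp add: xi_def cis_power_int)
  then have "cos (of_int m * (2 * pi / real n)) = 1" by (metis cis.sel(1) one_complex.sel(1))
  then obtain t :: int where t: "of_int m * (2 * pi / real n) = of_int t * 2 * pi"
    using cos_one_2pi_int by blast
  then have "real_of_int m = real_of_int t * real n" using n by (simp add: field_simps)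
  then have "m = t * int n" by (metis of_int_eq_iff of_int_mult of_int_of_nat_eq)
  then show "int n dvd m" by simp
next
  assume "int n dvd m"
  then obtain t where t: "m = int n * t" by blast
  have "of_int m * (2 * pi / real n) = 2 * pi * of_int t" using n t by (simp add: field_simps)
  then show "xi n powi m = 1" by (simp add: xi_def cis_power_int)
qed

lemma inv_char:
  assumes n: "n \<ge> 3"
  shows "f \<in> dihedral_invariants n \<longleftrightarrow>
    f \<in> fa_carrier \<and> (\<forall>w. f w \<noteq> 0 \<longrightarrow> int n dvd weight w) \<and> (\<forall>w. f (map Not w) = f w)"
proof
  assume h: "f \<in> dihedral_invariants n"
  then have c: "f \<in> fa_carrier" and d: "\<forall>j<n. \<forall>b. dih_act n j b f = f"
    by (auto simp: dihedral_invariants_def)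
  have "dih_act n 0 True f = f" using d n by auto
  then have t: "tau_act f = f" by (simp add: dih_act_def rho_act_def)
  have r: "dih_act n 1 False f = f" using d n by auto
  have "int n dvd weight w" if "f w \<noteq> 0" for w
  proof -
    have "xi n powi weight w * f w = f w" using fun_cong[OF r, of w] by (simp add: dih_act_def rho_act_def)
    then have "xi n powi weight w = 1" using that by simp
    then show ?thesis using xi_powi_eq_1[of n] n by simp
  qed
  moreover have "f (map Not w) = f w" for w using fun_cong[OF t, of w] by (simp add: tau_act_def)
  ultimately show "f \<in> fa_carrier \<and> (\<forall>w. f w \<noteq> 0 \<longrightarrow> int n dvd weight w) \<and> (\<forall>w. f (map Not w) = f w)"
    using c by blast
next
  assume h: "f \<in> fa_carrier \<and> (\<forall>w. f w \<noteq> 0 \<longrightarrow> int n dvd weight w) \<and> (\<forall>w. f (map Not w) = f w)"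
  have "dih_act n j b f = f" for j b
  proof
    fix w
    have tf: "tau_act f = f" using h by (auto simp: tau_act_def)
    show "dih_act n j b f w = f w"
    proof (cases "f w = 0")
      case True then show ?thesis using tf by (simp add: dih_act_def rho_act_def)
    next
      case False
      then have "int n dvd int j * weight w" using h by simp
      then have "xi n powi (int j * weight w) = 1" using xi_powi_eq_1[of n] n by simp
      then show ?thesis using tf by (simp add: dih_act_def rho_act_def)
    qed
  qed
  then show "f \<in> dihedral_invariants n" using h by (simp add: dihedral_invariants_def)
qed

lemma fsum_in:
  assumes F: "S_subalgebra F" and A: "finite A" and e: "\<forall>w\<in>A. ee w \<in> F"
  shows "(\<lambda>z. \<Sum>w\<in>A. c w * ee w z) \<in> F"
  using A e
proof (induct A rule: finite_induct)
  case empty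
  have "(\<lambda>z. 0::complex) = fa_smult 0 fa_one" by (simp add: fa_smult_def)
  then show ?case using S_smult[OF F S_one[OF F]] by simp
next
  case (insert x A)
  have "(\<lambda>z. \<Sum>w\<in>insert x A. c w * ee w z) = fa_add (fa_smult (c x) (ee x)) (\<lambda>z. \<Sum>w\<in>A. c w * ee w z)"
    using insert(1,2) by (simp add: fa_add_def fa_smult_def)
  then show ?case using insert S_add[OF F] S_smult[OF F] by simp
qed

lemma map_Not_eq: "map Not z = w \<longleftrightarrow> z = map Not w"
  by (metis map_Not_Not)

lemma inv_sub:
  assumes F: "S_subalgebra F" and n: "n \<ge> 3"
    and p: "ee [False, True] \<in> F" and q: "ee (replicate n False) \<in> F"
    and f: "f \<in> dihedral_invariants n"
  shows "f \<in> F"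
proof -
  have fc: "finite {w. f w \<noteq> 0}" and fd: "\<forall>w. f w \<noteq> 0 \<longrightarrow> int n dvd weight w"
    and fn: "\<forall>w. f (map Not w) = f w"
    using inv_char[OF n] f by (auto simp: fa_carrier_def)
  define S where "S = {w. f w \<noteq> 0}"
  have eS: "\<forall>w\<in>S. ee w \<in> F" using main_incl[OF F n p q] fd S_def by blast
  have eq: "f = fa_smult (1/2) (\<lambda>z. \<Sum>w\<in>S. f w * ee w z)"
  proof
    fix z
    have "(\<Sum>w\<in>S. f w * ee w z) = (\<Sum>w\<in>S. (if w = z then f w else 0)) + (\<Sum>w\<in>S. (if w = map Not z then f w else 0))"
      unfolding sum.distrib[symmetric] by (intro sum.cong refl) (auto simp: ee_def fa_add_def fa_mono_def map_Not_eq)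
    also have "\<dots> = f z + f (map Not z)"
      using fc unfolding S_def by (simp add: sum.delta')
    also have "\<dots> = 2 * f z" using fn by simp
    finally show "f z = fa_smult (1/2) (\<lambda>z. \<Sum>w\<in>S. f w * ee w z) z" by (simp add: fa_smult_def)
  qed
  show ?thesis
    by (subst eq) (intro S_smult[OF F] fsum_in[OF F _ eS], use fc S_def in simp)
qed


lemma mult_nonzero:
  assumes "fa_mult f g w \<noteq> 0"
  obtains i where "i \<le> length w" "f (take i w) \<noteq> 0" "g (drop i w) \<noteq> 0"
proof -
  obtain i where "i \<in> {..length w}" "f (take i w) * g (drop i w) \<noteq> 0"
    using assms sum.not_neutral_contains_not_neutral unfolding fa_mult_def by blast
  then show ?thesis using that by auto
qed

lemma inv_S_subalgebra:
  assumes n: "n \<ge> 3"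
  shows "S_subalgebra (dihedral_invariants n)"
proof -
  note ch = inv_char[OF n]
  let ?I = "dihedral_invariants n"
  have sub: "?I \<subseteq> fa_carrier" using ch by blast
  have one: "fa_one \<in> ?I"
    unfolding ch by (auto simp: fa_one_def fa_carrier_def)
  have add: "fa_add f g \<in> ?I" if "f \<in> ?I" "g \<in> ?I" for f g
  proof -
    have "{w. fa_add f g w \<noteq> 0} \<subseteq> {w. f w \<noteq> 0} \<union> {w. g w \<noteq> 0}" by (auto simp: fa_add_def)
    then show ?thesis using that unfolding ch by (auto simp: fa_add_def fa_carrier_def intro: finite_subset)
  qed
  have smult: "fa_smult c f \<in> ?I" if "f \<in> ?I" for f c
  proof -
    have "{w. fa_smult c f w \<noteq> 0} \<subseteq> {w. f w \<noteq> 0}" by (auto simp: fa_smult_def)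
    then show ?thesis using that unfolding ch by (auto simp: fa_smult_def fa_carrier_def intro: finite_subset)
  qed
  have mult: "fa_mult f g \<in> ?I" if f: "f \<in> ?I" and g: "g \<in> ?I" for f g
  proof -
    have ff: "finite {w. f w \<noteq> 0}" "finite {w. g w \<noteq> 0}" using f g ch by (auto simp: fa_carrier_def)
    have "{w. fa_mult f g w \<noteq> 0} \<subseteq> (\<lambda>(a, b). a @ b) ` ({w. f w \<noteq> 0} \<times> {w. g w \<noteq> 0})"
    proof
      fix w assume "w \<in> {w. fa_mult f g w \<noteq> 0}"
      then obtain i where "f (take i w) \<noteq> 0" "g (drop i w) \<noteq> 0" using mult_nonzero by blast
      then show "w \<in> (\<lambda>(a, b). a @ b) ` ({w. f w \<noteq> 0} \<times> {w. g w \<noteq> 0})"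
        by (intro image_eqI[of _ _ "(take i w, drop i w)"]) auto
    qed
    then have c: "fa_mult f g \<in> fa_carrier" unfolding fa_carrier_def using ff by (auto intro: finite_subset)
    have d: "int n dvd weight w" if nz: "fa_mult f g w \<noteq> 0" for w
    proof -
      obtain i where "i \<le> length w" "f (take i w) \<noteq> 0" "g (drop i w) \<noteq> 0" using mult_nonzero[OF nz] by blast
      then have "int n dvd weight (take i w) + weight (drop i w)" using f g ch by auto
      then show ?thesis by (metis append_take_drop_id weight_append)
    qed
    have t: "fa_mult f g (map Not w) = fa_mult f g w" for w
      using f g ch by (simp add: fa_mult_def take_map drop_map)
    show ?thesis unfolding ch using c d t by blast
  qed
  have hom: "hom_part k f \<in> ?I" if "f \<in> ?I" for f k
  proof -
    have "{w. hom_part k f w \<noteq> 0} \<subseteq> {w. f w \<noteq> 0}" by (auto simp: hom_part_def)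
    then show ?thesis using that unfolding ch by (auto simp: hom_part_def fa_carrier_def intro: finite_subset)
  qed
  have pos: "pos_act k \<pi> f \<in> ?I" if f: "f \<in> ?I" and pi: "\<pi> permutes {0..<k}" for f k \<pi>
  proof -
    have pl: "map (\<lambda>i. w ! \<pi> i) [0..<k] = permute_list \<pi> w" if "length w = k" for w :: "bool list"
      using that by (simp add: permute_list_def)
    have "{w. pos_act k \<pi> f w \<noteq> 0} \<subseteq> {xs. set xs \<subseteq> UNIV \<and> length xs = k}"
      by (auto simp: pos_act_def)
    then have c: "pos_act k \<pi> f \<in> fa_carrier" unfolding fa_carrier_def
      using finite_lists_length_eq[of "UNIV :: bool set" k] by (auto intro: finite_subset)
    have d: "int n dvd weight w" if "pos_act k \<pi> f w \<noteq> 0" for w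
    proof -
      have l: "length w = k" using that by (auto simp: pos_act_def split: if_splits)
      then have "f (permute_list \<pi> w) \<noteq> 0" using that pl by (simp add: pos_act_def)
      then have "int n dvd weight (permute_list \<pi> w)" using f ch by auto
      moreover have "mset (permute_list \<pi> w) = mset w" using pi l by (simp add: atLeast0LessThan)
      ultimately show ?thesis using weight_mset by metis
    qed
    have t: "pos_act k \<pi> f (map Not w) = pos_act k \<pi> f w" for w
    proof (cases "length w = k")
      case True
      have e: "map (\<lambda>i. map Not w ! \<pi> i) [0..<k] = map Not (map (\<lambda>i. w ! \<pi> i) [0..<k])"
        using permutes_in_image[OF pi] True by auto
      have "f (map Not (map (\<lambda>i. w ! \<pi> i) [0..<k])) = f (map (\<lambda>i. w ! \<pi> i) [0..<k])"
        using f ch by blast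
      then show ?thesis using True by (simp add: pos_act_def e)
    next
      case False then show ?thesis by (simp add: pos_act_def)
    qed
    show ?thesis unfolding ch using c d t by blast
  qed
  show ?thesis unfolding S_subalgebra_def
  proof (intro conjI ballI allI impI)
    show "?I \<subseteq> fa_carrier" by (rule sub)
    show "fa_one \<in> ?I" by (rule one)
  qed (simp_all add: add smult mult hom pos)
qed

lemma ee_inv:
  assumes n: "n \<ge> 3" and d: "int n dvd weight w"
  shows "ee w \<in> dihedral_invariants n"
proof -
  have "{z. ee w z \<noteq> 0} \<subseteq> {w, map Not w}" by (auto simp: ee_def fa_add_def fa_mono_def)
  then have c: "ee w \<in> fa_carrier" unfolding fa_carrier_def by (auto intro: finite_subset)
  have dd: "int n dvd weight z" if "ee w z \<noteq> 0" for z
    using that d by (auto simp: ee_def fa_add_def fa_mono_def split: if_splits)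
  have t: "ee w (map Not z) = ee w z" for z
    by (auto simp: ee_def fa_add_def fa_mono_def map_Not_eq)
  show ?thesis unfolding inv_char[OF n] using c dd t by blast
qed

theorem mainTheorem3:
  fixes n :: nat
  assumes "n \<ge> 3"
  shows "S_generated {fa_add (fa_mult fa_u fa_v) (fa_mult fa_v fa_u),
                      fa_add (fa_pow fa_u n) (fa_pow fa_v n)}
         = dihedral_invariants n"
proof -
  have pI: "ee [False, True] \<in> dihedral_invariants n" by (rule ee_inv[OF assms]) simp
  have qI: "ee (replicate n False) \<in> dihedral_invariants n" by (rule ee_inv[OF assms]) simp
  show ?thesis
    unfolding p_ee q_ee S_generated_def
  proof
    show "\<Inter> {F. S_subalgebra F \<and> {ee [False, True], ee (replicate n False)} \<subseteq> F} \<subseteq> dihedral_invariants n"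
      using inv_S_subalgebra[OF assms] pI qI by blast
    show "dihedral_invariants n \<subseteq> \<Inter> {F. S_subalgebra F \<and> {ee [False, True], ee (replicate n False)} \<subseteq> F}"
      using inv_sub[OF _ assms] by blast
  qed
qed

end
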